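(* Let $X$ be a separable metrizable space and $A\subsetneq X$ a proper subset. Then $\mathcal{M}(A)$ is of type $Z$ in $\mathcal{M}(X)$. More precisely, for $a\in X\setminus A$, the maps $\Phi_n\colon\mathcal{M}(X)\to\mathcal{M}(X)$, $\Phi_n(u)=a$ on $[0,1/n)$ and $\Phi_n(u)=u$ on $[1/n,1]$, have images disjoint from $\mathcal{M}(A)$ and converge to $\mathrm{id}_{\mathcal{M}(X)}$ uniformly on compact subsets of $\mathcal{M}(X)$. Moreover, $\overline{\mathcal{M}(A)}=\mathcal{M}(\overline{A})$.
   Context: For a separable metrizable space $X$, $\mathcal{M}(X)$ is the space of equivalence classes (modulo equality Lebesgue-a.e. on $[0,1]$) of Lebesgue measurable functions $u\colon[0,1]\to X$, topologized by the metric $(u,w)\mapsto\int_0^1 d(u(t),w(t))\,dt$ for any compatible bounded metric $d$ on $X$. For $A\subset X$, $\mathcal{M}(A)$ is the subset of $\mathcal{M}(X)$ of classes with a representative with values in $A$. A subset $B$ of a metric space $Z$ is of type $Z$ if the continuous maps from the Hilbert cube $Q$ into $Z\setminus B$ are dense in $\mathcal{C}(Q,Z)$ in the topology of uniform convergence. *)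

theory Defs
  imports "HOL-Analysis.Analysis"
begin

text \<open>Representatives of elements of M(X): Lebesgue measurable maps [0,1] -> X.
  Two representatives are identified iff they agree a.e.; we work with the
  pseudo-metric on representatives (its metric quotient is M(X)).\<close>

definition Meas :: "(real \<Rightarrow> 'a::topological_space) set" where
  "Meas = {u. u \<in> borel_measurable (lebesgue_on {0..1})}"

text \<open>The metric of M(X), using the compatible bounded metric min(dist,1) on X.\<close>
definition dist_M :: "(real \<Rightarrow> 'a::metric_space) \<Rightarrow> (real \<Rightarrow> 'a) \<Rightarrow> real" where
  "dist_M u w = integral\<^sup>L (lebesgue_on {0..1}) (\<lambda>t. min (dist (u t) (w t)) 1)"

definition MA :: "'a::topological_space set \<Rightarrow> (real \<Rightarrow> 'a) set" where
  "MA A = {u \<in> Meas. \<exists>v \<in> Meas. (\<forall>t\<in>{0..1}. v t \<in> A) \<and>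
                          (AE t in lebesgue_on {0..1}. u t = v t)}"

definition mopen :: "(real \<Rightarrow> 'a::metric_space) set \<Rightarrow> bool" where
  "mopen U \<longleftrightarrow> U \<subseteq> Meas \<and> (\<forall>u\<in>U. \<exists>e>0. \<forall>w\<in>Meas. dist_M u w < e \<longrightarrow> w \<in> U)"

lemma istopology_mopen: "istopology mopen"
  unfolding istopology_def mopen_def
proof (intro conjI allI impI)
  fix S T :: "(real \<Rightarrow> 'a) set"
  assume S: "S \<subseteq> Meas \<and> (\<forall>u\<in>S. \<exists>e>0. \<forall>w\<in>Meas. dist_M u w < e \<longrightarrow> w \<in> S)"
     and T: "T \<subseteq> Meas \<and> (\<forall>u\<in>T. \<exists>e>0. \<forall>w\<in>Meas. dist_M u w < e \<longrightarrow> w \<in> T)"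
  show "S \<inter> T \<subseteq> Meas" using S by blast
  show "\<forall>u\<in>S \<inter> T. \<exists>e>0. \<forall>w\<in>Meas. dist_M u w < e \<longrightarrow> w \<in> S \<inter> T"
  proof
    fix u assume "u \<in> S \<inter> T"
    then obtain e1 e2 where "e1 > 0" "\<forall>w\<in>Meas. dist_M u w < e1 \<longrightarrow> w \<in> S"
      "e2 > 0" "\<forall>w\<in>Meas. dist_M u w < e2 \<longrightarrow> w \<in> T" using S T by blast
    then show "\<exists>e>0. \<forall>w\<in>Meas. dist_M u w < e \<longrightarrow> w \<in> S \<inter> T"
      by (intro exI[of _ "min e1 e2"]) auto
  qed
next
  fix K :: "(real \<Rightarrow> 'a) set set"
  assume K: "\<forall>S\<in>K. S \<subseteq> Meas \<and> (\<forall>u\<in>S. \<exists>e>0. \<forall>w\<in>Meas. dist_M u w < e \<longrightarrow> w \<in> S)"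
  show "\<Union>K \<subseteq> Meas" using K by blast
  show "\<forall>u\<in>\<Union>K. \<exists>e>0. \<forall>w\<in>Meas. dist_M u w < e \<longrightarrow> w \<in> \<Union>K"
    using K by (meson UnionE UnionI)
qed

definition mtop :: "(real \<Rightarrow> 'a::metric_space) topology" where
  "mtop = topology mopen"

definition hilbert_cube :: "(nat \<Rightarrow> real) set" where
  "hilbert_cube = {q. \<forall>n. q n \<in> {0..1}}"

definition type_Z :: "(real \<Rightarrow> 'a::metric_space) set \<Rightarrow> bool" where
  "type_Z B \<longleftrightarrow>
     (\<forall>f. continuous_map (top_of_set hilbert_cube) mtop f \<longrightarrow>
        (\<forall>e>0. \<exists>g. continuous_map (top_of_set hilbert_cube) mtop g \<and>
                    g ` hilbert_cube \<inter> B = {} \<and>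
                    (\<forall>q\<in>hilbert_cube. dist_M (f q) (g q) < e)))"

definition Phi :: "nat \<Rightarrow> 'a \<Rightarrow> (real \<Rightarrow> 'a) \<Rightarrow> (real \<Rightarrow> 'a)" where
  "Phi n a u = (\<lambda>t. if t < 1 / real n then a else u t)"

end

theory Submission
  imports Defs
begin

abbreviation "LL \<equiv> lebesgue_on {0..1::real}"

lemma fmL: "finite_measure LL" by (simp add: finite_measure_lebesgue_on)

lemma meas_f:
  fixes u w :: "real \<Rightarrow> 'a::{metric_space, second_countable_topology}"
  assumes "u \<in> Meas" "w \<in> Meas"
  shows "(\<lambda>t. min (dist (u t) (w t)) 1) \<in> borel_measurable LL"
proof -
  have [measurable]: "u \<in> borel_measurable LL" "w \<in> borel_measurable LL"
    using assms by (auto simp: Meas_def)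
  show ?thesis by measurable
qed

lemma int_f:
  fixes u w :: "real \<Rightarrow> 'a::{metric_space, second_countable_topology}"
  assumes "u \<in> Meas" "w \<in> Meas"
  shows "integrable LL (\<lambda>t. min (dist (u t) (w t)) 1)"
  by (rule finite_measure.integrable_const_bound[OF fmL, where B=1]) (auto intro: meas_f[OF assms])

lemma dist_M_nonneg: "dist_M u w \<ge> 0"
  unfolding dist_M_def by (rule Bochner_Integration.integral_nonneg) simp

lemma min_tri: "(x::real) \<le> y + z \<Longrightarrow> 0 \<le> y \<Longrightarrow> 0 \<le> z \<Longrightarrow> min x 1 \<le> min y 1 + min z 1"
  by (cases "x \<le> 1"; cases "y \<le> 1"; cases "z \<le> 1") (simp_all add: min_def)

lemma dist_M_triangle:
  fixes u v w :: "real \<Rightarrow> 'a::{metric_space, second_countable_topology}"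
  assumes "u \<in> Meas" "v \<in> Meas" "w \<in> Meas"
  shows "dist_M u w \<le> dist_M u v + dist_M v w"
proof -
  have "dist_M u w \<le> integral\<^sup>L LL (\<lambda>t. min (dist (u t) (v t)) 1 + min (dist (v t) (w t)) 1)"
    unfolding dist_M_def
  proof (rule integral_mono)
    show "integrable LL (\<lambda>t. min (dist (u t) (w t)) 1)" using int_f[OF assms(1,3)] .
    show "integrable LL (\<lambda>t. min (dist (u t) (v t)) 1 + min (dist (v t) (w t)) 1)"
      using int_f[OF assms(1,2)] int_f[OF assms(2,3)] by (rule Bochner_Integration.integrable_add)
    fix t
    show "min (dist (u t) (w t)) 1 \<le> min (dist (u t) (v t)) 1 + min (dist (v t) (w t)) 1"
      using min_tri[OF dist_triangle[of "u t" "w t" "v t"] zero_le_dist zero_le_dist] .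
  qed
  also have "\<dots> = dist_M u v + dist_M v w"
    unfolding dist_M_def by (rule Bochner_Integration.integral_add[OF int_f[OF assms(1,2)] int_f[OF assms(2,3)]])
  finally show ?thesis .
qed

lemma openin_mtop: "openin mtop = mopen"
  unfolding mtop_def by (simp add: istopology_mopen)

lemma topspace_mtop: "topspace mtop = Meas"
proof -
  have "mopen (Meas :: (real \<Rightarrow> 'a) set)" unfolding mopen_def using zero_less_one by blast
  then show ?thesis unfolding topspace_def openin_mtop by (auto simp: mopen_def) (use zero_less_one in blast)
qed

lemma ball_open:
  fixes u :: "real \<Rightarrow> 'a::{metric_space, second_countable_topology}"
  assumes "u \<in> Meas"
  shows "mopen {w\<in>Meas. dist_M u w < e}"
  unfolding mopen_def
proof safe
  fix w assume w: "w \<in> Meas" "dist_M u w < e"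
  show "\<exists>e'>0. \<forall>w'\<in>Meas. dist_M w w' < e' \<longrightarrow> w' \<in> {w \<in> Meas. dist_M u w < e}"
  proof (intro exI[of _ "e - dist_M u w"] conjI ballI impI)
    fix w' assume "w' \<in> Meas" "dist_M w w' < e - dist_M u w"
    then show "w' \<in> {w \<in> Meas. dist_M u w < e}"
      using dist_M_triangle[OF assms w(1) \<open>w' \<in> Meas\<close>] by auto
  qed (use w in auto)
qed

lemma cont_lip:
  fixes h :: "(real \<Rightarrow> 'a::{metric_space, second_countable_topology}) \<Rightarrow> (real \<Rightarrow> 'a)"
  assumes "\<And>u. u\<in>Meas \<Longrightarrow> h u \<in> Meas"
    and "\<And>u w. u\<in>Meas \<Longrightarrow> w\<in>Meas \<Longrightarrow> dist_M (h u) (h w) \<le> dist_M u w"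
  shows "continuous_map mtop mtop h"
  unfolding continuous_map openin_mtop topspace_mtop
proof (intro conjI allI impI)
  show "h ` Meas \<subseteq> Meas" using assms(1) by auto
  fix U :: "(real \<Rightarrow> 'a) set" assume U: "mopen U"
  show "mopen {x \<in> Meas. h x \<in> U}"
    unfolding mopen_def
  proof safe
    fix u assume u: "u \<in> Meas" "h u \<in> U"
    then obtain e where e: "e > 0" "\<forall>w\<in>Meas. dist_M (h u) w < e \<longrightarrow> w \<in> U"
      using U unfolding mopen_def by blast
    show "\<exists>e>0. \<forall>w\<in>Meas. dist_M u w < e \<longrightarrow> w \<in> {x \<in> Meas. h x \<in> U}"
      using e assms u by (intro exI[of _ e]) (smt (verit, best) mem_Collect_eq)
  qed
qed

lemma Phi_meas:
  fixes u :: "real \<Rightarrow> 'a::{metric_space, second_countable_topology}"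
  assumes "u \<in> Meas" shows "Phi n a u \<in> Meas"
proof -
  have [measurable]: "u \<in> borel_measurable LL" using assms by (auto simp: Meas_def)
  have [measurable]: "(\<lambda>t::real. t) \<in> borel_measurable LL"
    by (rule measurable_restrict_space1) (simp add: measurable_completion)
  have "(\<lambda>t. if t < 1 / real n then a else u t) \<in> borel_measurable LL" by measurable
  then show ?thesis unfolding Meas_def Phi_def by simp
qed

lemma Phi_lip:
  fixes u w :: "real \<Rightarrow> 'a::{metric_space, second_countable_topology}"
  assumes "u \<in> Meas" "w \<in> Meas"
  shows "dist_M (Phi n a u) (Phi n a w) \<le> dist_M u w"
  unfolding dist_M_def
proof (rule integral_mono)
  show "integrable LL (\<lambda>t. min (dist (Phi n a u t) (Phi n a w t)) 1)"
    using int_f[OF Phi_meas[OF assms(1)] Phi_meas[OF assms(2)]] .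
  show "integrable LL (\<lambda>t. min (dist (u t) (w t)) 1)" using int_f[OF assms] .
  fix t show "min (dist (Phi n a u t) (Phi n a w t)) 1 \<le> min (dist (u t) (w t)) 1"
    unfolding Phi_def by auto
qed

lemma sub_Ico: "n \<ge> (1::nat) \<Longrightarrow> {0..<1/real n} \<subseteq> {0..1::real}"
proof -
  assume "n \<ge> 1" then have "1/real n \<le> 1" by (simp add: divide_le_eq_1)
  then show ?thesis by auto
qed

lemma Ico_sets: "n \<ge> (1::nat) \<Longrightarrow> {0..<1/real n} \<in> sets LL"
  using sub_Ico by (subst sets_restrict_space_iff) auto

lemma LL_Ico: assumes "n \<ge> (1::nat)"
  shows "emeasure LL {0..<1/real n} = ennreal (1/real n)"
    "measure LL {0..<1/real n} = 1/real n"
proof -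
  have sub: "{0..<1/real n} \<subseteq> {0..1::real}" using sub_Ico assms by auto
  show "emeasure LL {0..<1/real n} = ennreal (1/real n)"
    by (subst emeasure_restrict_space) (use sub in \<open>auto simp: emeasure_completion\<close>)
  show "measure LL {0..<1/real n} = 1/real n"
    by (subst measure_restrict_space) (use sub in \<open>auto simp: measure_completion\<close>)
qed

lemma Phi_close:
  fixes u :: "real \<Rightarrow> 'a::{metric_space, second_countable_topology}"
  assumes "u \<in> Meas" "n \<ge> 1"
  shows "dist_M (Phi n a u) u \<le> 1 / real n"
proof -
  have sub: "{0..<1/real n} \<subseteq> {0..1::real}" using sub_Ico assms by auto
  have ii: "integrable LL (indicator {0..<1/real n} :: real \<Rightarrow> real)"
    by (rule finite_measure.integrable_const_bound[OF fmL, where B=1])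
      (auto intro: borel_measurable_indicator Ico_sets[OF assms(2)])
  have "dist_M (Phi n a u) u \<le> integral\<^sup>L LL (indicator {0..<1/real n})"
    unfolding dist_M_def
  proof (rule integral_mono)
    show "integrable LL (\<lambda>t. min (dist (Phi n a u t) (u t)) 1)"
      using int_f[OF Phi_meas[OF assms(1)] assms(1)] .
    show "integrable LL (indicator {0..<1/real n} :: real \<Rightarrow> real)" using ii .
    fix t assume "t \<in> space LL"
    then show "min (dist (Phi n a u t) (u t)) 1 \<le> indicator {0..<1/real n} t"
      unfolding Phi_def by (auto simp: indicator_def)
  qed
  also have "\<dots> = 1 / real n" using LL_Ico[OF assms(2)] sub
    by (simp add: Int_absorb2)
  finally show ?thesis .
qed

lemma Phi_notin:
  fixes u :: "real \<Rightarrow> 'a::{metric_space, second_countable_topology}"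
  assumes "u \<in> Meas" "n \<ge> 1" "a \<notin> A"
  shows "Phi n a u \<notin> MA A"
proof
  assume "Phi n a u \<in> MA A"
  then obtain v where v: "\<forall>t\<in>{0..1}. v t \<in> A" "AE t in LL. Phi n a u t = v t"
    unfolding MA_def by blast
  have "AE t in LL. t \<notin> {0..<1/real n}"
    using v(2)
  proof (rule AE_mp[OF _ AE_I2])
    fix t assume "t \<in> space LL"
    then show "Phi n a u t = v t \<longrightarrow> t \<notin> {0..<1 / real n}"
      using v(1) assms(3) unfolding Phi_def by auto
  qed
  moreover have "{t \<in> space LL. \<not> t \<notin> {0..<1/real n}} = {0..<1/real n}"
    using sub_Ico[OF assms(2)] by auto
  ultimately have "emeasure LL {0..<1/real n} = 0"
    using AE_iff_measurable[OF Ico_sets[OF assms(2)], of "\<lambda>t. t \<notin> {0..<1/real n}"] by blast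
  then show False using LL_Ico(1)[OF assms(2)] assms(2) by simp
qed

lemma dist_M_self: "dist_M u u = 0"
  unfolding dist_M_def by simp

lemma ae_conv:
  fixes u :: "real \<Rightarrow> 'a::{metric_space, second_countable_topology}"
  assumes u: "u \<in> Meas" and w: "\<And>k. w k \<in> Meas"
    and d: "\<And>k. dist_M u (w k) \<le> (1/2)^k"
  shows "AE t in LL. (\<lambda>k. w k t) \<longlonglongrightarrow> u t"
proof -
  define f where "f k t = min (dist (u t) (w k t)) 1" for k t
  have fm[measurable]: "f k \<in> borel_measurable LL" for k
    unfolding f_def using meas_f[OF u w] .
  have fi: "integrable LL (f k)" for k unfolding f_def using int_f[OF u w] .
  have f0: "0 \<le> f k t" for k t unfolding f_def by simp
  have "(\<integral>\<^sup>+ t. (\<Sum>k. ennreal (f k t)) \<partial>LL) = (\<Sum>k. \<integral>\<^sup>+ t. ennreal (f k t) \<partial>LL)"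
    by (rule nn_integral_suminf) measurable
  also have "\<dots> = (\<Sum>k. ennreal (integral\<^sup>L LL (f k)))"
    by (intro suminf_cong nn_integral_eq_integral fi) (simp add: f0)
  also have "\<dots> \<le> (\<Sum>k. ennreal ((1/2)^k))"
    by (intro suminf_le) (use d in \<open>auto simp: f_def[abs_def] dist_M_def intro: ennreal_leI\<close>)
  also have "\<dots> = ennreal (\<Sum>k. (1/2)^k)"
    by (rule suminf_ennreal2) auto
  finally have "(\<integral>\<^sup>+ t. (\<Sum>k. ennreal (f k t)) \<partial>LL) \<noteq> \<infinity>"
    by (auto simp: top_unique)
  then have "AE t in LL. (\<Sum>k. ennreal (f k t)) \<noteq> \<infinity>"
    by (intro nn_integral_PInf_AE) measurable
  then show ?thesis
  proof (rule AE_mp[OF _ AE_I2], intro impI)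
    fix t assume "(\<Sum>k. ennreal (f k t)) \<noteq> \<infinity>"
    then have "summable (\<lambda>k. f k t)"
      using summable_suminf_not_top f0 by (metis infinity_ennreal_def)
    then have lim: "(\<lambda>k. f k t) \<longlonglongrightarrow> 0" by (rule summable_LIMSEQ_zero)
    show "(\<lambda>k. w k t) \<longlonglongrightarrow> u t"
    proof (rule tendstoI)
      fix e :: real assume e: "e > 0"
      have "\<forall>\<^sub>F k in sequentially. dist (f k t) 0 < min e 1"
        using tendstoD[OF lim, of "min e 1"] e by simp
      then show "\<forall>\<^sub>F k in sequentially. dist (w k t) (u t) < e"
      proof (rule eventually_mono)
        fix k assume "dist (f k t) 0 < min e 1"
        then show "dist (w k t) (u t) < e"
          unfolding f_def by (auto simp: dist_commute split: if_splits)
      qed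
    qed
  qed
qed

lemma dist_M_cong:
  fixes u y v :: "real \<Rightarrow> 'a::{metric_space, second_countable_topology}"
  assumes "u \<in> Meas" "y \<in> Meas" "v \<in> Meas" "AE t in LL. y t = v t"
  shows "dist_M u y = dist_M u v"
  unfolding dist_M_def
  by (rule integral_cong_AE[OF meas_f[OF assms(1,2)] meas_f[OF assms(1,3)]])
     (rule AE_mp[OF assms(4)], rule AE_I2, simp)

lemma closure1:
  fixes A :: "'a::{metric_space, second_countable_topology} set"
  shows "mtop closure_of MA A \<subseteq> MA (closure A)"
proof
  fix u assume u: "u \<in> mtop closure_of MA A"
  then have uM: "u \<in> Meas" and cl: "\<And>T. u \<in> T \<Longrightarrow> mopen T \<Longrightarrow> (\<exists>y. y \<in> MA A \<and> y \<in> T)"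
    unfolding in_closure_of topspace_mtop openin_mtop by auto
  have "\<exists>w. w \<in> Meas \<and> (\<forall>t\<in>{0..1}. w t \<in> A) \<and> dist_M u w \<le> (1/2)^k" for k
  proof -
    obtain y where y: "y \<in> MA A" "y \<in> {w\<in>Meas. dist_M u w < (1/2)^k}"
    proof -
      have "u \<in> {w\<in>Meas. dist_M u w < (1/2)^k}" using uM dist_M_self[of u] by simp
      from cl[OF this ball_open[OF uM]] show ?thesis using that by blast
    qed
    then obtain v where v: "v \<in> Meas" "\<forall>t\<in>{0..1}. v t \<in> A" "AE t in LL. y t = v t"
      unfolding MA_def by blast
    have "dist_M u v = dist_M u y" using dist_M_cong[OF uM _ v(1) v(3)] y by auto
    then show ?thesis using v y by (intro exI[of _ v]) auto
  qed
  then obtain w where w: "\<And>k. w k \<in> Meas" "\<And>k. \<forall>t\<in>{0..1}. w k t \<in> A"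
    "\<And>k. dist_M u (w k) \<le> (1/2)^k" by metis
  have "AE t in LL. u t \<in> closure A"
    using ae_conv[OF uM w(1) w(3)]
  proof (rule AE_mp[OF _ AE_I2], intro impI)
    fix t assume "t \<in> space LL" "(\<lambda>k. w k t) \<longlonglongrightarrow> u t"
    then show "u t \<in> closure A" unfolding closure_sequential using w(2)
      by (intro exI[of _ "\<lambda>k. w k t"]) auto
  qed
  then obtain N where N: "{t \<in> space LL. \<not> u t \<in> closure A} \<subseteq> N" "emeasure LL N = 0" "N \<in> sets LL"
    by (rule AE_E)
  define c where "c = w 0 0"
  have "c \<in> A" unfolding c_def using w(2)[of 0] by simp
  then have c: "c \<in> closure A" using closure_subset by blast
  define v where "v t = (if t \<in> N then c else u t)" for t
  have [measurable]: "u \<in> borel_measurable LL" using uM by (simp add: Meas_def)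
  have "v \<in> Meas" unfolding Meas_def v_def
    by (simp, rule measurable_If_set) (use N(3) sets.sets_into_space in \<open>auto simp: Int_absorb2\<close>)
  moreover have "\<forall>t\<in>{0..1}. v t \<in> closure A" using N(1) c by (auto simp: v_def)
  moreover have "AE t in LL. u t = v t"
  proof -
    have "N \<in> null_sets LL" using N(2,3) by (simp add: null_setsI)
    from AE_not_in[OF this] show ?thesis by (rule AE_mp) (rule AE_I2, simp add: v_def)
  qed
  ultimately show "u \<in> MA (closure A)" unfolding MA_def using uM by blast
qed

lemma dense_countable:
  fixes A :: "'a::{metric_space, second_countable_topology} set"
  obtains D where "countable D" "D \<subseteq> A" "\<And>x \<delta>. x \<in> closure A \<Longrightarrow> \<delta> > 0 \<Longrightarrow> \<exists>d\<in>D. dist x d < \<delta>"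
proof -
  obtain B :: "'a set set" where B: "countable B" "topological_basis B"
    using ex_countable_basis by blast
  define D where "D = (\<lambda>b. SOME x. x \<in> b \<inter> A) ` {b\<in>B. b \<inter> A \<noteq> {}}"
  have "countable D" unfolding D_def using B(1) by auto
  moreover have "D \<subseteq> A" unfolding D_def by (auto intro: someI2_ex)
  moreover have "\<exists>d\<in>D. dist x d < \<delta>" if x: "x \<in> closure A" "\<delta> > 0" for x \<delta>
  proof -
    have "x \<in> ball x \<delta>" using x(2) by simp
    then obtain b where b: "b \<in> B" "x \<in> b" "b \<subseteq> ball x \<delta>"
      using topological_basisE[OF B(2) open_ball] by blast
    have "open b" using B(2) b(1) topological_basis_open by blast
    have "b \<inter> A \<noteq> {}"
    proof
      assume "b \<inter> A = {}"
      then have "b \<inter> closure A = {}" using open_Int_closure_eq_empty[OF \<open>open b\<close>] by blast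
      then show False using b(2) x(1) by blast
    qed
    then have "(SOME y. y \<in> b \<inter> A) \<in> b \<inter> A" using someI_ex[of "\<lambda>y. y \<in> b \<inter> A"] by blast
    moreover have "(SOME y. y \<in> b \<inter> A) \<in> D" unfolding D_def using b(1) \<open>b \<inter> A \<noteq> {}\<close> by auto
    ultimately show ?thesis using b(3) unfolding subset_iff mem_ball by blast
  qed
  ultimately show ?thesis using that by blast
qed

lemma dist_M_sym: "dist_M u w = dist_M w u"
  unfolding dist_M_def by (simp add: dist_commute)

lemma measure_LL: "measure LL (space LL) = 1"
  by (subst measure_restrict_space) (auto simp: measure_completion)

lemma closure2:
  fixes A :: "'a::{metric_space, second_countable_topology} set"
  shows "MA (closure A) \<subseteq> mtop closure_of MA A"
proof
  fix u assume "u \<in> MA (closure A)"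
  then obtain v where uM: "u \<in> Meas" and v: "v \<in> Meas" "\<forall>t\<in>{0..1}. v t \<in> closure A"
    "AE t in LL. u t = v t" unfolding MA_def by blast
  obtain D where D: "countable D" "D \<subseteq> A" "\<And>x \<delta>. x \<in> closure A \<Longrightarrow> \<delta> > 0 \<Longrightarrow> \<exists>d\<in>D. dist x d < \<delta>"
    using dense_countable[of A] by blast
  have "D \<noteq> {}" using D(3)[OF v(2)[rule_format, of 0], of 1] by auto
  define s where "s = from_nat_into D"
  have s: "range s = D" unfolding s_def using D(1) \<open>D \<noteq> {}\<close> by (simp add: range_from_nat_into)
  show "u \<in> mtop closure_of MA A"
    unfolding in_closure_of topspace_mtop openin_mtop
  proof (intro conjI allI impI uM)
    fix T assume T: "u \<in> T \<and> mopen T"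
    then obtain e where e: "e > 0" "\<forall>w\<in>Meas. dist_M u w < e \<longrightarrow> w \<in> T"
      unfolding mopen_def by blast
    define \<delta> where "\<delta> = e / 2"
    have \<delta>: "\<delta> > 0" "\<delta> < e" using e(1) by (auto simp: \<delta>_def)
    define idx where "idx t = (LEAST k. dist (v t) (s k) < \<delta>)" for t
    define w where "w t = s (idx t)" for t
    have [measurable]: "v \<in> borel_measurable LL" using v(1) by (simp add: Meas_def)
    have "idx \<in> measurable LL (count_space UNIV)" unfolding idx_def by measurable
    then have wM: "w \<in> Meas" unfolding Meas_def w_def
      by (simp add: measurable_compose[where f=idx and g=s, unfolded comp_def])
    have wA: "w t \<in> A" for t unfolding w_def using s D(2) by auto
    have wd: "dist (v t) (w t) < \<delta>" if tt: "t \<in> {0..1}" for t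
    proof -
      obtain d where "d \<in> D" "dist (v t) d < \<delta>" using D(3)[OF v(2)[rule_format, OF tt] \<delta>(1)] by blast
      then obtain k where "dist (v t) (s k) < \<delta>" using s by auto
      then show ?thesis unfolding w_def idx_def by (rule LeastI)
    qed
    have "dist_M u w = dist_M v w"
      using dist_M_cong[OF wM uM v(1) v(3)] by (simp add: dist_M_sym)
    also have "\<dots> \<le> integral\<^sup>L LL (\<lambda>t. \<delta>)"
      unfolding dist_M_def
    proof (rule integral_mono)
      show "integrable LL (\<lambda>t. min (dist (v t) (w t)) 1)" using int_f[OF v(1) wM] .
      show "integrable LL (\<lambda>t. \<delta>)" by simp
      fix t assume "t \<in> space LL"
      then show "min (dist (v t) (w t)) 1 \<le> \<delta>" using wd[of t] by simp
    qed
    also have "\<dots> = \<delta>" using measure_LL by simp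
    finally have "dist_M u w < e" using \<delta> by simp
    then have "w \<in> T" using e(2) wM by blast
    moreover have "w \<in> MA A" unfolding MA_def using wM wA by (auto intro!: bexI[of _ w])
    ultimately show "\<exists>y. y \<in> MA A \<and> y \<in> T" by blast
  qed
qed


lemma small_n: "e > 0 \<Longrightarrow> \<exists>N::nat. N \<ge> 1 \<and> 1 / real N < e"
proof -
  assume "e > 0"
  then obtain N :: nat where "N > 0" "inverse (real N) < e" using ex_inverse_of_nat_less by blast
  then show ?thesis by (intro exI[of _ N]) (auto simp: divide_inverse)
qed

theorem mainTheorem5:
  fixes A :: "'a::{metric_space, second_countable_topology} set"
  assumes "A \<noteq> UNIV"
  shows "type_Z (MA A)
    \<and> (\<forall>a. a \<notin> A \<longrightarrow>
          (\<forall>n\<ge>1. \<forall>u\<in>Meas. Phi n a u \<in> Meas \<and> Phi n a u \<notin> MA A)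
        \<and> (\<forall>K. compactin mtop K \<longrightarrow>
              (\<forall>e>0. \<exists>N. \<forall>n\<ge>N. \<forall>u\<in>K. dist_M (Phi n a u) u < e)))
    \<and> mtop closure_of (MA A) = MA (closure A)"
proof (intro conjI)
  obtain a where a: "a \<notin> A" using assms by auto
  show "type_Z (MA A)"
    unfolding type_Z_def
  proof (intro allI impI)
    fix f :: "(nat \<Rightarrow> real) \<Rightarrow> real \<Rightarrow> 'a" and e :: real
    assume f: "continuous_map (top_of_set hilbert_cube) mtop f" and e: "e > 0"
    obtain N :: nat where N: "N \<ge> 1" "1 / real N < e" using small_n[OF e] by blast
    have fM: "f q \<in> Meas" if "q \<in> hilbert_cube" for q
      using continuous_map_image_subset_topspace[OF f] that topspace_mtop by auto
    have cg: "continuous_map mtop mtop (Phi N a)"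
      by (rule cont_lip) (auto intro: Phi_meas Phi_lip)
    show "\<exists>g. continuous_map (top_of_set hilbert_cube) mtop g \<and> g ` hilbert_cube \<inter> MA A = {} \<and>
               (\<forall>q\<in>hilbert_cube. dist_M (f q) (g q) < e)"
    proof (intro exI[of _ "Phi N a \<circ> f"] conjI ballI)
      show "continuous_map (top_of_set hilbert_cube) mtop (Phi N a \<circ> f)"
        using continuous_map_compose[OF f cg] .
      show "(Phi N a \<circ> f) ` hilbert_cube \<inter> MA A = {}"
        using Phi_notin[OF fM N(1) a] by auto
      fix q assume "q \<in> hilbert_cube"
      then have "dist_M (f q) ((Phi N a \<circ> f) q) \<le> 1 / real N"
        using Phi_close[OF fM N(1)] by (simp add: dist_M_sym)
      then show "dist_M (f q) ((Phi N a \<circ> f) q) < e" using N(2) by linarith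
    qed
  qed
next
  show "\<forall>a. a \<notin> A \<longrightarrow>
          (\<forall>n\<ge>1. \<forall>u\<in>Meas. Phi n a u \<in> Meas \<and> Phi n a u \<notin> MA A)
        \<and> (\<forall>K. compactin mtop K \<longrightarrow>
              (\<forall>e>0. \<exists>N. \<forall>n\<ge>N. \<forall>u\<in>K. dist_M (Phi n a u) u < e))"
  proof (rule allI, rule impI, rule conjI)
  fix a assume a: "a \<notin> A"
  show "\<forall>n\<ge>1. \<forall>u\<in>Meas. Phi n a u \<in> Meas \<and> Phi n a u \<notin> MA A"
    using Phi_meas Phi_notin[OF _ _ a] by blast
  show "\<forall>K. compactin mtop K \<longrightarrow> (\<forall>e>0. \<exists>N. \<forall>n\<ge>N. \<forall>u\<in>K. dist_M (Phi n a u) u < e)"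
  proof (intro allI impI)
    fix K :: "(real \<Rightarrow> 'a) set" and e :: real
    assume K: "compactin mtop K" and e: "e > 0"
    then have KM: "K \<subseteq> Meas" using compactin_subset_topspace topspace_mtop by metis
    obtain N :: nat where N: "N \<ge> 1" "1 / real N < e" using small_n[OF e] by blast
    show "\<exists>N. \<forall>n\<ge>N. \<forall>u\<in>K. dist_M (Phi n a u) u < e"
    proof (intro exI[of _ N] allI impI ballI)
      fix n u assume n: "n \<ge> N" and u: "u \<in> K"
      have "dist_M (Phi n a u) u \<le> 1 / real n" using Phi_close[of u n a] KM u n N(1) by auto
      also have "\<dots> \<le> 1 / real N" using n N(1) by (simp add: frac_le)
      finally show "dist_M (Phi n a u) u < e" using N(2) by linarith
    qed
  qed
  qed
next
  show "mtop closure_of MA A = MA (closure A)" using closure1 closure2 by blast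
qed

end
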